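(* There exist a rational polyhedron $P\subseteq\mathbb{R}^3$ and a cubic polynomial $f:\mathbb{R}^3\to\mathbb{R}$ such that $f$ is unbounded on some ray of $P$, but for every ray $R(y,d)$ of $P$ on which $f$ is unbounded, the vector $d$ is not rational. (For instance, $P=\operatorname{cone}\{y\in\mathbb{R}^3 : (y_1,y_2)\in[1.25,1.26]\times[1.58,1.59],\ y_3=1\}$ and $f(y) = -2y_1^3-y_2^3+6y_1y_2y_3-4y_3^3+y_1y_3$.)
   Context: For a polyhedron $P\subseteq\mathbb{R}^n$ with recession cone $\operatorname{rec} P$, a ray of $P$ is a set $R(x,d):=\{x+\lambda d:\lambda\ge 0\}$ with $x\in P$ and $d\in\operatorname{rec}P\setminus\{0\}$. A function $f$ is unbounded on a set $S$ if $\sup_{x\in S} f(x)=+\infty$. *)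

theory Defs
  imports "HOL-Analysis.Analysis"
begin

definition rational_vec :: "real^3 \<Rightarrow> bool" where
  "rational_vec v \<longleftrightarrow> (\<forall>i. v $ i \<in> \<rat>)"

definition rational_polyhedron :: "(real^3) set \<Rightarrow> bool" where
  "rational_polyhedron P \<longleftrightarrow>
     (\<exists>F. finite F \<and> (\<forall>(a,b)\<in>F. rational_vec a \<and> b \<in> \<rat>) \<and>
          P = {x. \<forall>(a,b)\<in>F. a \<bullet> x \<le> b})"

definition rec_cone :: "(real^3) set \<Rightarrow> (real^3) set" where
  "rec_cone P = {d. \<forall>x\<in>P. \<forall>t::real. t \<ge> 0 \<longrightarrow> x + t *\<^sub>R d \<in> P}"

definition ray :: "real^3 \<Rightarrow> real^3 \<Rightarrow> (real^3) set" where
  "ray x d = {x + t *\<^sub>R d | t::real. t \<ge> 0}"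

definition unbounded_on :: "(real^3 \<Rightarrow> real) \<Rightarrow> (real^3) set \<Rightarrow> bool" where
  "unbounded_on f S \<longleftrightarrow> \<not> bdd_above (f ` S)"

definition cubic_poly :: "(real^3 \<Rightarrow> real) \<Rightarrow> bool" where
  "cubic_poly f \<longleftrightarrow>
     (\<exists>c :: nat \<Rightarrow> nat \<Rightarrow> nat \<Rightarrow> real.
        (\<forall>i j k. i + j + k > 3 \<longrightarrow> c i j k = 0) \<and>
        (\<exists>i j k. i + j + k = 3 \<and> c i j k \<noteq> 0) \<and>
        (\<forall>x. f x = (\<Sum>i\<le>3. \<Sum>j\<le>3. \<Sum>k\<le>3. c i j k * (x$1)^i * (x$2)^j * (x$3)^k)))"

end

theory Submission
  imports Defs
begin

lemma cbrt2_irr: "(x::real) \<in> \<rat> \<Longrightarrow> x ^ 3 \<noteq> 2"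
proof
  assume "x \<in> \<rat>" "x^3 = 2"
  then obtain m n :: nat where n: "n \<noteq> 0" and ax: "\<bar>x\<bar> = real m / real n" and cop: "coprime m n"
    by (meson Rats_abs_nat_div_natE)
  have "\<not> x \<le> 0"
  proof
    assume "x \<le> 0" hence "x^3 \<le> 0" by (simp add: power_le_zero_eq)
    with \<open>x^3 = 2\<close> show False by simp
  qed
  hence "\<bar>x\<bar>^3 = 2" using \<open>x^3 = 2\<close> by simp
  hence "(real m)^3 = 2 * (real n)^3" using n ax by (simp add: power_divide field_simps)
  hence e: "m^3 = 2 * n^3" by (metis of_nat_eq_iff of_nat_mult of_nat_numeral of_nat_power)
  hence "2 dvd m^3" by simp
  hence "2 dvd m" using prime_dvd_power_nat[of 2] by simp
  then obtain k where "m = 2*k" by blast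
  with e have "4 * k^3 = n^3" by (simp add: power_mult_distrib)
  hence "n^3 = 2 * (2 * k^3)" by simp
  hence "2 dvd n^3" by (metis dvd_triv_left)
  hence "2 dvd n" using prime_dvd_power_nat[of 2] by simp
  with \<open>2 dvd m\<close> cop show False
    by (metis coprime_common_divisor_nat one_neq_zero nat_dvd_1_iff_1 numeral_eq_one_iff semiring_norm(85))
qed

lemma cubic_bdd:
  fixes A B C D :: real assumes "A < 0"
  shows "\<exists>M. \<forall>t\<ge>0. A*t^3 + B*t^2 + C*t + D \<le> M"
proof -
  define K where "K = (\<bar>B\<bar> + \<bar>C\<bar>) / (-A) + 1"
  have K1: "K \<ge> 1" using assms unfolding K_def by (simp add: divide_nonneg_neg)
  show ?thesis
  proof (intro exI allI impI)
    fix t :: real assume t: "t \<ge> 0"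
    show "A*t^3 + B*t^2 + C*t + D \<le> D + \<bar>B\<bar>*K^2 + \<bar>C\<bar>*K"
    proof (cases "t \<le> K")
      case True
      have "A*t^3 \<le> 0" using assms t by (simp add: mult_nonpos_nonneg)
      moreover have "B*t^2 \<le> \<bar>B\<bar>*K^2"
        using True t by (metis abs_ge_self abs_ge_zero mult_mono power_mono zero_le_power)
      moreover have "C*t \<le> \<bar>C\<bar>*K" using True t by (meson abs_ge_self abs_ge_zero mult_mono)
      moreover have "0 \<le> \<bar>B\<bar>*K^2 + \<bar>C\<bar>*K" using K1 by simp
      ultimately show ?thesis by linarith
    next
      case False
      hence tK: "t \<ge> K" "t \<ge> 1" using K1 by auto
      have "(\<bar>B\<bar> + \<bar>C\<bar>) \<le> (-A) * t"
      proof -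
        have "(\<bar>B\<bar> + \<bar>C\<bar>) = (-A) * (K - 1)" using assms unfolding K_def by simp
        also have "\<dots> \<le> (-A) * t" using tK assms by (intro mult_left_mono) auto
        finally show ?thesis .
      qed
      hence "(\<bar>B\<bar> + \<bar>C\<bar>) * t^2 \<le> ((-A) * t) * t^2" by (rule mult_right_mono) simp
      moreover have "B*t^2 + C*t \<le> (\<bar>B\<bar> + \<bar>C\<bar>) * t^2"
      proof -
        have "t \<le> t^2" using tK by (simp add: power2_eq_square)
        hence "\<bar>C\<bar>*t \<le> \<bar>C\<bar>*t^2" by (rule mult_left_mono) simp
        moreover have "C*t \<le> \<bar>C\<bar>*t" using tK by (intro mult_right_mono) auto
        ultimately have "C*t \<le> \<bar>C\<bar>*t^2" by linarith
        moreover have "B*t^2 \<le> \<bar>B\<bar>*t^2" by (simp add: mult_right_mono)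
        ultimately show ?thesis by (simp add: algebra_simps)
      qed
      moreover have "(-A) * t * t^2 = -(A*t^3)" by (simp add: power3_eq_cube power2_eq_square)
      moreover have "0 \<le> \<bar>B\<bar>*K^2 + \<bar>C\<bar>*K" using K1 by simp
      ultimately show ?thesis by linarith
    qed
  qed
qed

definition fP :: "real^3 \<Rightarrow> real" where
  "fP x = -2*(x$1)^3 - (x$2)^3 + 6*(x$1)*(x$2)*(x$3) - 4*(x$3)^3 + (x$1)*(x$3)"

definition PP :: "(real^3) set" where "PP = {x. \<forall>i. 0 \<le> x$i}"

lemma cubic_fP: "cubic_poly fP"
  unfolding cubic_poly_def
proof (intro exI conjI allI impI)
  define c :: "nat \<Rightarrow> nat \<Rightarrow> nat \<Rightarrow> real" where
    "c i j k = (if (i,j,k) = (3,0,0) then -2 else if (i,j,k) = (0,3,0) then -1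
       else if (i,j,k) = (1,1,1) then 6 else if (i,j,k) = (0,0,3) then -4
       else if (i,j,k) = (1,0,1) then 1 else 0)" for i j k
  show "c i j k = 0" if "i+j+k > 3" for i j k using that unfolding c_def by auto
  show "3+0+0 = (3::nat)" by simp
  show "c 3 0 0 \<noteq> 0" unfolding c_def by simp
  fix x :: "real^3"
  show "fP x = (\<Sum>i\<le>3. \<Sum>j\<le>3. \<Sum>k\<le>3. c i j k * (x$1)^i * (x$2)^j * (x$3)^k)"
    unfolding fP_def c_def by (simp add: numeral_3_eq_3 algebra_simps)
qed

lemma rat_polyhedron_PP: "rational_polyhedron PP"
  unfolding rational_polyhedron_def
proof (intro exI conjI)
  define F where "F = (\<lambda>i. (- axis i (1::real) :: real^3, 0::real)) ` UNIV"
  show "finite F" unfolding F_def by simp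
  show "\<forall>(a,b)\<in>F. rational_vec a \<and> b \<in> \<rat>"
    unfolding F_def rational_vec_def by (auto simp: axis_def)
  show "PP = {x. \<forall>(a,b)\<in>F. a \<bullet> x \<le> b}"
    unfolding F_def PP_def by (auto simp: inner_commute[of "axis _ _"] inner_axis)
qed

lemma rec_PP: "rec_cone PP = PP"
proof
  show "rec_cone PP \<subseteq> PP"
  proof
    fix d assume "d \<in> rec_cone PP"
    moreover have "0 \<in> PP" by (simp add: PP_def)
    moreover have H: "\<forall>x\<in>PP. \<forall>t\<ge>0. x + t *\<^sub>R d \<in> PP" using \<open>d \<in> rec_cone PP\<close> unfolding rec_cone_def by simp
    ultimately have "0 + 1 *\<^sub>R d \<in> PP" using zero_le_one by blast
    thus "d \<in> PP" by simp
  qed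
  show "PP \<subseteq> rec_cone PP"
    unfolding rec_cone_def PP_def by auto
qed

lemma alpha3: "root 3 2 ^ 3 = (2::real)" by simp

lemma f_ray_poly: "fP (y + t *\<^sub>R d) =
  (-2*(d$1)^3 - (d$2)^3 + 6*(d$1)*(d$2)*(d$3) - 4*(d$3)^3) * t^3
  + (-6*(y$1)*(d$1)^2 - 3*(y$2)*(d$2)^2 + 6*((y$1)*(d$2)*(d$3) + (d$1)*(y$2)*(d$3) + (d$1)*(d$2)*(y$3))
     - 12*(y$3)*(d$3)^2 + (d$1)*(d$3)) * t^2
  + (-6*(y$1)^2*(d$1) - 3*(y$2)^2*(d$2) + 6*((y$1)*(y$2)*(d$3) + (y$1)*(d$2)*(y$3) + (d$1)*(y$2)*(y$3))
     - 12*(y$3)^2*(d$3) + (y$1)*(d$3) + (d$1)*(y$3)) * t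
  + fP y"
  unfolding fP_def by (simp add: algebra_simps power2_eq_square power3_eq_cube)

lemma f3_neg:
  assumes d: "d \<in> PP" "d \<noteq> 0" "rational_vec d"
  shows "-2*(d$1)^3 - (d$2)^3 + 6*(d$1)*(d$2)*(d$3) - 4*(d$3)^3 < 0"
proof -
  define \<alpha> :: real where "\<alpha> = root 3 2"
  have a3: "\<alpha>^3 = 2" unfolding \<alpha>_def by simp
  have apos: "\<alpha> > 0" unfolding \<alpha>_def by simp
  have nn: "0 \<le> d$1" "0 \<le> d$2" "0 \<le> d$3" using d(1) by (auto simp: PP_def)
  define a where "a = d$2"
  define b where "b = d$1 * \<alpha>"
  define c where "c = d$3 * \<alpha>^2"
  have abc: "a \<ge> 0" "b \<ge> 0" "c \<ge> 0" using nn apos unfolding a_def b_def c_def by auto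
  have eq: "-(-2*(d$1)^3 - (d$2)^3 + 6*(d$1)*(d$2)*(d$3) - 4*(d$3)^3) = a^3+b^3+c^3-3*a*b*c"
  proof -
    have "b^3 = 2*(d$1)^3" unfolding b_def using a3 by (simp add: power_mult_distrib)
    moreover have "c^3 = 4*(d$3)^3"
    proof -
      have "\<alpha>^6 = (\<alpha>^3)^2" by (simp flip: power_mult)
      hence a6: "\<alpha>^6 = 4" using a3 by simp
      have "c^3 = (d$3)^3 * \<alpha>^6" unfolding c_def by (simp add: power_mult_distrib flip: power_mult)
      thus ?thesis using a6 by simp
    qed
    moreover have "3*a*b*c = 6*(d$1)*(d$2)*(d$3)" unfolding a_def b_def c_def using a3
      by (simp add: power3_eq_cube power2_eq_square algebra_simps)
    ultimately show ?thesis unfolding a_def by linarith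
  qed
  have id: "2*(a^3+b^3+c^3-3*a*b*c) = (a+b+c)*((a-b)^2+(b-c)^2+(c-a)^2)"
    by (simp add: algebra_simps power2_eq_square power3_eq_cube)
  have "a^3+b^3+c^3-3*a*b*c > 0"
  proof (rule ccontr)
    assume "\<not> ?thesis"
    moreover have "a^3+b^3+c^3-3*a*b*c \<ge> 0" using id abc
      by (smt (verit) mult_nonneg_nonneg sum_power2_ge_zero zero_le_power2)
    ultimately have "(a+b+c)*((a-b)^2+(b-c)^2+(c-a)^2) = 0" using id by simp
    hence "a+b+c = 0 \<or> (a-b)^2+(b-c)^2+(c-a)^2 = 0" by simp
    hence "a = b \<and> b = c" using abc
      by (smt (verit) sum_power2_eq_zero_iff zero_le_power2)
    show False
    proof (cases "d$1 = 0")
      case True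
      hence "a = 0" "c = 0" using \<open>a = b \<and> b = c\<close> unfolding b_def by auto
      hence "d$2 = 0" "d$3 = 0" using apos unfolding a_def c_def by auto
      hence "d = 0" using True by (simp add: vec_eq_iff forall_3)
      with d(2) show False by simp
    next
      case False
      have "d$2 = d$1 * \<alpha>" using \<open>a = b \<and> b = c\<close> unfolding a_def b_def by simp
      hence "\<alpha> = d$2 / d$1" using False by (simp add: field_simps)
      moreover have "d$2 / d$1 \<in> \<rat>" using d(3) unfolding rational_vec_def by simp
      ultimately show False using cbrt2_irr a3 by blast
    qed
  qed
  with eq show ?thesis by linarith
qed

theorem proposition1:
  shows "\<exists>(P :: (real^3) set) (f :: real^3 \<Rightarrow> real).
           rational_polyhedron P \<and> cubic_poly f \<and>
           (\<exists>x d. x \<in> P \<and> d \<in> rec_cone P \<and> d \<noteq> 0 \<and> unbounded_on f (ray x d)) \<and>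
           (\<forall>y d. y \<in> P \<and> d \<in> rec_cone P \<and> d \<noteq> 0 \<and> unbounded_on f (ray y d)
                  \<longrightarrow> \<not> rational_vec d)"
proof (intro exI conjI allI impI)
  show "rational_polyhedron PP" by (rule rat_polyhedron_PP)
  show "cubic_poly fP" by (rule cubic_fP)
  define \<alpha> :: real where "\<alpha> = root 3 2"
  have a3: "\<alpha>^3 = 2" unfolding \<alpha>_def by simp
  have apos: "\<alpha> > 0" unfolding \<alpha>_def by simp
  define d :: "real^3" where "d = vector [\<alpha>, \<alpha>^2, 1]"
  have d1: "d$1 = \<alpha>" "d$2 = \<alpha>^2" "d$3 = 1" unfolding d_def by simp_all
  show "(0::real^3) \<in> PP" by (simp add: PP_def)
  have "d \<in> PP" unfolding PP_def using apos by (auto simp: forall_3 d1)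
  thus "d \<in> rec_cone PP" using rec_PP by simp
  show "d \<noteq> 0"
  proof
    assume "d = 0" hence "d$3 = 0" by simp
    with d1(3) show False by simp
  qed
  have fv: "fP (0 + t *\<^sub>R d) = \<alpha> * t^2" for t
  proof -
    have "fP (0 + t *\<^sub>R d) = (-2*\<alpha>^3 - \<alpha>^6 + 6*\<alpha>^3 - 4) * t^3 + \<alpha> * t^2"
      unfolding fP_def by (simp add: d1 algebra_simps power_mult_distrib flip: power_mult)
        (simp add: power2_eq_square power3_eq_cube)
    moreover have "\<alpha>^6 = (\<alpha>^3)^2" by (simp flip: power_mult)
    ultimately show ?thesis using a3 by simp
  qed
  show "unbounded_on fP (ray 0 d)"
    unfolding unbounded_on_def bdd_above_def
  proof
    assume "\<exists>M. \<forall>x\<in>fP ` ray 0 d. x \<le> M"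
    then obtain M where M: "\<forall>x\<in>fP ` ray 0 d. x \<le> M" by blast
    define t where "t = \<bar>M\<bar> / \<alpha> + 1"
    have t1: "t \<ge> 1" unfolding t_def using apos by simp
    have "0 + t *\<^sub>R d \<in> ray 0 d" unfolding ray_def using t1 by auto
    hence "\<alpha> * t^2 \<le> M" using M fv by force
    moreover have "\<alpha> * t \<le> \<alpha> * t^2" using t1 apos by (simp add: power2_eq_square)
    moreover have "\<alpha> * t = \<bar>M\<bar> + \<alpha>" unfolding t_def using apos by (simp add: field_simps)
    ultimately show False using apos by linarith
  qed
next
  fix y d :: "real^3"
  assume H: "y \<in> PP \<and> d \<in> rec_cone PP \<and> d \<noteq> 0 \<and> unbounded_on fP (ray y d)"
  show "\<not> rational_vec d"
  proof
    assume rd: "rational_vec d"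
    have dP: "d \<in> PP" using H rec_PP by simp
    have A: "-2*(d$1)^3 - (d$2)^3 + 6*(d$1)*(d$2)*(d$3) - 4*(d$3)^3 < 0"
      using f3_neg dP H rd by blast
    then obtain M where M: "\<And>t. t \<ge> 0 \<Longrightarrow> fP (y + t *\<^sub>R d) \<le> M"
      using cubic_bdd[OF A] f_ray_poly by metis
    have "bdd_above (fP ` ray y d)"
      unfolding bdd_above_def ray_def using M by auto
    with H show False unfolding unbounded_on_def by simp
  qed
qed

end
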